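(* Let $L$ be a finite list with $t$ marked items, where $|L|/4 < t \le |L|$, and let $\theta \in (0,\pi/2]$ satisfy $\sin^2\theta = t/|L|$. For a positive integer $m$, let $P_m$ be the probability of finding a marked item when one chooses $j$ uniformly at random among the non-negative integers smaller than $m$, applies $j$ Grover iterations to the uniform superposition over $L$ and measures. Then $$P_m \ge \begin{cases} \frac14 & \text{for } m = 1,\\ \frac12 - \frac{1}{2\pi}\frac{1}{1-\frac{\pi^2}{96}} \approx 0.323 & \text{for } m > 1.\end{cases}$$
   Context: A Grover iteration is the unitary that reflects through the unmarked states followed by a reflection through the uniform superposition over $L$. For $\theta \ne \pi/2$ one has $P_m = \frac12 - \frac{\sin(4m\theta)}{4m\sin(2\theta)}$. *)

theory Defs
  imports Complex_Main
begin

text \<open>Quantum states on a finite list (index set) L are amplitude functions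
  L \<Rightarrow> real (all amplitudes occurring in Grover search are real).
  M is the set of marked items.\<close>

definition uniform_state :: "'a set \<Rightarrow> ('a \<Rightarrow> real)" where
  "uniform_state L = (\<lambda>x. if x \<in> L then 1 / sqrt (real (card L)) else 0)"

definition reflect_unmarked :: "'a set \<Rightarrow> ('a \<Rightarrow> real) \<Rightarrow> ('a \<Rightarrow> real)" where
  "reflect_unmarked M \<psi> = (\<lambda>x. if x \<in> M then - \<psi> x else \<psi> x)"

definition reflect_uniform :: "'a set \<Rightarrow> ('a \<Rightarrow> real) \<Rightarrow> ('a \<Rightarrow> real)" where
  "reflect_uniform L \<psi> =
     (let u = uniform_state L; c = (\<Sum>y\<in>L. u y * \<psi> y) in (\<lambda>x. 2 * c * u x - \<psi> x))"

definition grover_iter :: "'a set \<Rightarrow> 'a set \<Rightarrow> ('a \<Rightarrow> real) \<Rightarrow> ('a \<Rightarrow> real)" where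
  "grover_iter L M \<psi> = reflect_uniform L (reflect_unmarked M \<psi>)"

definition grover_success :: "'a set \<Rightarrow> 'a set \<Rightarrow> nat \<Rightarrow> real" where
  "grover_success L M j = (\<Sum>x\<in>M. (((grover_iter L M ^^ j) (uniform_state L)) x)\<^sup>2)"

definition P_avg :: "'a set \<Rightarrow> 'a set \<Rightarrow> nat \<Rightarrow> real" where
  "P_avg L M m = (\<Sum>j<m. grover_success L M j) / real m"

end

theory Submission imports Defs "HOL-Analysis.Complex_Transcendental" begin

definition gstate :: "'a set \<Rightarrow> 'a set \<Rightarrow> real \<Rightarrow> real \<Rightarrow> 'a \<Rightarrow> real" where
 "gstate L M A B = (\<lambda>x. if x\<in>M then A else if x\<in>L then B else 0)"

lemma grover_step:
  fixes A B :: real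
  assumes "finite L" "M \<subseteq> L"
  defines "c \<equiv> (real (card (L - M)) * B - real (card M) * A) / sqrt (card L)"
  shows "grover_iter L M (gstate L M A B) = gstate L M (2*c/sqrt(card L) + A) (2*c/sqrt (card L) - B)"
proof -
  let ?u = "uniform_state L"
  let ?p = "reflect_unmarked M (gstate L M A B)"
  have fM: "finite M" using assms finite_subset by blast
  have "(\<Sum>y\<in>L. ?u y * ?p y) = (\<Sum>y\<in>L-M. ?u y * ?p y) + (\<Sum>y\<in>M. ?u y * ?p y)"
    using sum.subset_diff[OF assms(2) assms(1)] by simp
  also have "(\<Sum>y\<in>L-M. ?u y * ?p y) = (\<Sum>y\<in>L-M. B / sqrt (card L))"
    by (rule sum.cong) (auto simp: uniform_state_def reflect_unmarked_def gstate_def)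
  also have "(\<Sum>y\<in>M. ?u y * ?p y) = (\<Sum>y\<in>M. - A / sqrt (card L))"
    using assms(2) by (intro sum.cong) (auto simp: uniform_state_def reflect_unmarked_def gstate_def)
  finally have "(\<Sum>y\<in>L. ?u y * ?p y) = real (card (L - M)) * B / sqrt (card L) - real (card M) * A / sqrt (card L)"
    by simp
  then have cc: "(\<Sum>y\<in>L. ?u y * ?p y) = c"
    unfolding c_def by (simp only: diff_divide_distrib)
  have "grover_iter L M (gstate L M A B) = (\<lambda>x. 2 * c * ?u x - ?p x)"
    unfolding grover_iter_def reflect_uniform_def Let_def cc by (rule refl)
  also have "\<dots> = gstate L M (2*c/sqrt(card L) + A) (2*c/sqrt (card L) - B)"
  proof
    fix x show "2 * c * ?u x - ?p x = gstate L M (2*c/sqrt(card L) + A) (2*c/sqrt (card L) - B) x"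
      using assms(2) by (cases "x \<in> M"; cases "x \<in> L") (auto simp: uniform_state_def reflect_unmarked_def gstate_def)
  qed
  finally show ?thesis .
qed


lemma trig1: "sin (a + 2*(t::real)) = sin a + 2 * cos (a + t) * sin t"
proof -
  have h: "cos (a+t) * sin t = (sin (a+t+t) - sin (a+t-t)) / 2" by (rule cos_times_sin)
  have e1: "a+t+t = a + 2*t" and e2: "a+t-t = a" by simp_all
  show ?thesis using h unfolding e1 e2 by simp
qed

lemma trig2: "cos (a + 2*(t::real)) = 2 * cos (a + t) * cos t - cos a"
proof -
  have h: "cos (a+t) * cos t = (cos (a+t-t) + cos (a+t+t)) / 2" by (rule cos_times_cos)
  have e1: "a+t+t = a + 2*t" and e2: "a+t-t = a" by simp_all
  show ?thesis using h unfolding e1 e2 by simp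
qed

lemma sum_telescope: "2 * sin (2*t) * (\<Sum>j<m. cos ((4 * real j + 2) * t)) = sin (4 * real m * (t::real))"
proof (induction m)
  case 0 then show ?case by simp
next
  case (Suc m)
  have h: "cos ((4 * real m + 2) * t) * sin (2*t) = (sin ((4 * real m + 2) * t + 2*t) - sin ((4 * real m + 2) * t - 2*t)) / 2"
    by (rule cos_times_sin)
  have a: "(4 * real m + 2) * t + 2*t = 4 * real (Suc m) * t" by (simp add: algebra_simps)
  have b: "(4 * real m + 2) * t - 2*t = 4*real m*t" by (simp add: algebra_simps)
  have "2 * sin (2*t) * (\<Sum>j<Suc m. cos ((4 * real j + 2) * t)) =
        2 * sin (2*t) * (\<Sum>j<m. cos ((4 * real j + 2) * t)) + 2 * (cos ((4 * real m + 2) * t) * sin (2*t))"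
    by (simp add: algebra_simps)
  also have "\<dots> = sin (4 * real (Suc m) * t)" unfolding Suc.IH h a b by (simp add: diff_divide_distrib)
  finally show ?case .
qed


lemma gstate_eq:
  assumes "A = A'" "L - M \<noteq> {} \<Longrightarrow> B = B'"
  shows "gstate L M A B = gstate L M A' B'"
  using assms by (auto simp: gstate_def fun_eq_iff)

lemma grover_state:
  fixes L M :: "'a set" and \<theta> :: real
  assumes fin: "finite L" and sub: "M \<subseteq> L" and tpos: "0 < card M"
    and th0: "0 < \<theta>" and th1: "\<theta> \<le> pi / 2"
    and sn: "(sin \<theta>)\<^sup>2 = real (card M) / real (card L)"
  shows "(grover_iter L M ^^ j) (uniform_state L) =
     gstate L M (sin ((2*real j+1)*\<theta>) / sqrt (card M)) (cos ((2*real j+1)*\<theta>) / sqrt (card (L - M)))"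
proof -
  define N where "N = real (card L)"
  define t where "t = real (card M)"
  define k where "k = real (card (L - M))"
  have fM: "finite M" using fin sub finite_subset by blast
  have tN: "card M \<le> card L" using card_mono[OF fin sub] .
  have kdef: "k = N - t" unfolding k_def N_def t_def using card_Diff_subset[OF fM sub] tN by simp
  have tp: "t > 0" using tpos t_def by simp
  have Np: "N > 0" using tN tpos N_def by simp
  have sinp: "sin \<theta> > 0" using th0 th1 by (intro sin_gt_zero) (use pi_gt_zero in linarith)+
  have cosn: "cos \<theta> \<ge> 0" using th0 th1 by (intro cos_ge_zero) linarith+
  have st: "sqrt t = sqrt N * sin \<theta>"
  proof -
    have "t = N * (sin \<theta>)\<^sup>2" using sn Np unfolding t_def N_def by simp
    then have "sqrt t = sqrt N * sqrt ((sin \<theta>)\<^sup>2)" by (simp add: real_sqrt_mult)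
    then show ?thesis using sinp by simp
  qed
  have sk: "sqrt k = sqrt N * cos \<theta>"
  proof -
    have "k = N * (cos \<theta>)\<^sup>2" using sn Np unfolding kdef t_def N_def
      by (simp add: cos_squared_eq algebra_simps)
    then have "sqrt k = sqrt N * sqrt ((cos \<theta>)\<^sup>2)" by (simp add: real_sqrt_mult)
    then show ?thesis using cosn by simp
  qed
  have sNp: "sqrt N > 0" using Np by simp
  have kpos: "L - M \<noteq> {} \<Longrightarrow> k > 0" unfolding k_def using fin by (simp add: card_gt_0_iff)
  have cpos: "L - M \<noteq> {} \<Longrightarrow> cos \<theta> > 0" using kpos sk sNp cosn
    by (metis less_eq_real_def mult_zero_right real_sqrt_gt_0_iff)
  have step: "grover_iter L M (gstate L M (sin a / sqrt t) (cos a / sqrt k)) =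
      gstate L M (sin (a + 2*\<theta>) / sqrt t) (cos (a + 2*\<theta>) / sqrt k)" for a
  proof -
    have kk: "k * (cos a / sqrt k) = sqrt k * cos a"
    proof (cases "k = 0")
      case False
      then have "k = sqrt k * sqrt k" using kdef kpos k_def by simp
      then show ?thesis using False by (metis divide_eq_0_iff mult.commute nonzero_mult_div_cancel_left times_divide_eq_right real_sqrt_eq_zero_cancel_iff)
    qed simp
    have tt: "t * (sin a / sqrt t) = sqrt t * sin a"
    proof -
      have "t = sqrt t * sqrt t" using tp by simp
      then show ?thesis using tp by (metis mult.commute nonzero_mult_div_cancel_left times_divide_eq_right real_sqrt_gt_0_iff less_irrefl)
    qed
    have c: "(k * (cos a / sqrt k) - t * (sin a / sqrt t)) / sqrt N = cos (a + \<theta>)"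
      unfolding kk tt unfolding st sk using sNp by (simp add: cos_add field_simps)
    have "grover_iter L M (gstate L M (sin a / sqrt t) (cos a / sqrt k)) =
       gstate L M (2 * cos (a + \<theta>) / sqrt N + sin a / sqrt t) (2 * cos (a + \<theta>) / sqrt N - cos a / sqrt k)"
    proof -
      have gs: "grover_iter L M (gstate L M (sin a / sqrt t) (cos a / sqrt k)) =
        gstate L M (2 * ((k * (cos a / sqrt k) - t * (sin a / sqrt t)) / sqrt N) / sqrt N + sin a / sqrt t)
          (2 * ((k * (cos a / sqrt k) - t * (sin a / sqrt t)) / sqrt N) / sqrt N - cos a / sqrt k)"
        using grover_step[OF fin sub, of "sin a / sqrt t" "cos a / sqrt k"]
        unfolding k_def t_def N_def .
      show ?thesis unfolding gs c by (rule refl)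
    qed
    also have "\<dots> = gstate L M (sin (a + 2*\<theta>) / sqrt t) (cos (a + 2*\<theta>) / sqrt k)"
    proof (rule gstate_eq)
      show "2 * cos (a + \<theta>) / sqrt N + sin a / sqrt t = sin (a + 2*\<theta>) / sqrt t"
        unfolding trig1 st using sNp sinp by (simp add: field_simps)
      assume "L - M \<noteq> {}"
      then have "cos \<theta> > 0" by (rule cpos)
      then show "2 * cos (a + \<theta>) / sqrt N - cos a / sqrt k = cos (a + 2*\<theta>) / sqrt k"
        unfolding trig2 sk using sNp by (simp add: field_simps)
    qed
    finally show ?thesis .
  qed
  have base: "uniform_state L = gstate L M (sin \<theta> / sqrt t) (cos \<theta> / sqrt k)"
  proof -
    have "uniform_state L = gstate L M (1 / sqrt N) (1 / sqrt N)"
      using sub by (auto simp: uniform_state_def gstate_def fun_eq_iff N_def)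
    also have "\<dots> = gstate L M (sin \<theta> / sqrt t) (cos \<theta> / sqrt k)"
      by (rule gstate_eq) (use sinp cpos in \<open>simp_all add: st sk\<close>)
    finally show ?thesis .
  qed
  have "(grover_iter L M ^^ j) (uniform_state L) =
     gstate L M (sin ((2*real j+1)*\<theta>) / sqrt t) (cos ((2*real j+1)*\<theta>) / sqrt k)"
  proof (induction j)
    case 0 then show ?case using base by simp
  next
    case (Suc j)
    have e: "(2*real (Suc j)+1)*\<theta> = (2*real j+1)*\<theta> + 2*\<theta>" by (simp add: algebra_simps)
    show ?case unfolding e using Suc step by simp
  qed
  then show ?thesis unfolding t_def k_def .
qed

lemma sin_ge_cubic:
  fixes x :: real assumes "0 \<le> x" shows "x - x^3/6 \<le> sin x"
proof -
  have cosb: "1 - u^2/2 \<le> cos u" if "0 \<le> u" for u :: real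
  proof -
    let ?g = "\<lambda>x::real. cos x - 1 + x^2/2"
    have "\<And>v. \<lbrakk>0 \<le> v; v \<le> u\<rbrakk> \<Longrightarrow> (?g has_real_derivative (v - sin v)) (at v)"
      by (auto intro!: derivative_eq_intros simp: field_simps)
    moreover have "\<And>v. \<lbrakk>0 \<le> v; v \<le> u\<rbrakk> \<Longrightarrow> 0 \<le> v - sin v" using sin_x_le_x by simp
    ultimately have "?g u \<ge> ?g 0"
      by (intro DERIV_nonneg_imp_nondecreasing[OF that]) blast
    then show ?thesis by simp
  qed
  let ?f = "\<lambda>x::real. sin x - x + x^3/6"
  have "\<And>v. \<lbrakk>0 \<le> v; v \<le> x\<rbrakk> \<Longrightarrow> (?f has_real_derivative (cos v - 1 + v^2/2)) (at v)"
    by (auto intro!: derivative_eq_intros simp: field_simps)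
  moreover have "\<And>v. \<lbrakk>0 \<le> v; v \<le> x\<rbrakk> \<Longrightarrow> 0 \<le> cos v - 1 + v^2/2" using cosb by fastforce
  ultimately have "?f x \<ge> ?f 0"
    by (intro DERIV_nonneg_imp_nondecreasing[OF assms]) blast
  then show ?thesis by simp
qed


lemma success_formula:
  fixes L M :: "'a set" and \<theta> :: real
  assumes fin: "finite L" and sub: "M \<subseteq> L" and tpos: "0 < card M"
    and th0: "0 < \<theta>" and th1: "\<theta> \<le> pi / 2"
    and sn: "(sin \<theta>)\<^sup>2 = real (card M) / real (card L)"
  shows "grover_success L M j = (sin ((2*real j+1)*\<theta>))\<^sup>2"
proof -
  have "grover_success L M j = (\<Sum>x\<in>M. (sin ((2*real j+1)*\<theta>) / sqrt (card M))\<^sup>2)"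
    unfolding grover_success_def grover_state[OF assms]
    by (rule sum.cong) (auto simp: gstate_def)
  also have "\<dots> = real (card M) * ((sin ((2*real j+1)*\<theta>))\<^sup>2 / real (card M))"
    by (simp add: power_divide)
  also have "\<dots> = (sin ((2*real j+1)*\<theta>))\<^sup>2" using tpos by simp
  finally show ?thesis .
qed

lemma P_avg_formula:
  fixes L M :: "'a set" and \<theta> :: real
  assumes fin: "finite L" and sub: "M \<subseteq> L" and tpos: "0 < card M"
    and th0: "0 < \<theta>" and th1: "\<theta> \<le> pi / 2"
    and sn: "(sin \<theta>)\<^sup>2 = real (card M) / real (card L)" and m: "0 < m"
  shows "P_avg L M m = 1/2 - (\<Sum>j<m. cos ((4 * real j + 2) * \<theta>)) / (2 * real m)"
proof -
  have sq: "(sin ((2*real j+1)*\<theta>))\<^sup>2 = 1/2 - cos ((4 * real j + 2) * \<theta>) / 2" for j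
  proof -
    have "cos (2 * ((2*real j+1)*\<theta>)) = 1 - 2 * (sin ((2*real j+1)*\<theta>))\<^sup>2"
      by (rule cos_double_sin)
    moreover have "2 * ((2*real j+1)*\<theta>) = (4 * real j + 2) * \<theta>" by (simp add: algebra_simps)
    ultimately show ?thesis by (simp add: diff_divide_distrib)
  qed
  have "P_avg L M m = (\<Sum>j<m. 1/2 - cos ((4 * real j + 2) * \<theta>) / 2) / real m"
    unfolding P_avg_def success_formula[OF fin sub tpos th0 th1 sn] sq ..
  also have "\<dots> = (real m / 2 - (\<Sum>j<m. cos ((4 * real j + 2) * \<theta>)) / 2) / real m"
    by (simp add: sum_subtractf sum_divide_distrib)
  also have "\<dots> = 1/2 - (\<Sum>j<m. cos ((4 * real j + 2) * \<theta>)) / (2 * real m)"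
    using m by (simp add: field_simps)
  finally show ?thesis .
qed

lemma numeric: "1 \<le> 4 * sqrt 2 * (1 / (2 * pi) * (1 / (1 - pi\<^sup>2 / 96)))"
proof -
  have p1: "3.1415 \<le> pi" "pi \<le> 3.1416" using pi_approx by (simp_all add: field_simps)
  have s2: "1.4142 \<le> sqrt 2"
    by (rule real_le_rsqrt) (simp add: power2_eq_square)
  have c3: "3.1415^3 \<le> pi^3" using p1 by (intro power_mono) auto
  have D: "0 < 1 - pi\<^sup>2 / 96"
  proof -
    have "pi\<^sup>2 \<le> 4^2" using pi_less_4 pi_gt_zero by (intro power_mono) auto
    then show ?thesis by simp
  qed
  have e: "1 / (2 * pi) * (1 / (1 - pi\<^sup>2 / 96)) = 1 / (2*pi - pi^3/48)"
    using D pi_gt_zero by (simp add: field_simps power2_eq_square power3_eq_cube)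
  have pos: "0 < 2*pi - pi^3/48" using D pi_gt_zero
    by (metis e divide_pos_pos mult_pos_pos zero_less_divide_1_iff zero_less_numeral)
  have c4: "31.0035 \<le> pi^3" by (rule order_trans[OF _ c3]) (simp add: power3_eq_cube)
  have "2*pi - pi^3/48 \<le> 4 * sqrt 2" using p1 s2 c4 by linarith
  then show ?thesis unfolding e using pos by (simp add: field_simps)
qed

theorem lemma14:
  fixes L M :: "'a set" and \<theta> :: real and m :: nat
  assumes "finite L" and "M \<subseteq> L"
    and "real (card L) / 4 < real (card M)"
    and "0 < \<theta>" and "\<theta> \<le> pi / 2"
    and "(sin \<theta>)\<^sup>2 = real (card M) / real (card L)"
    and "0 < m"
  shows "P_avg L M m \<ge>
           (if m = 1 then 1 / 4 else 1 / 2 - 1 / (2 * pi) * (1 / (1 - pi\<^sup>2 / 96)))"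
proof -
  note fin = assms(1) and sub = assms(2) and big = assms(3) and th0 = assms(4) and th1 = assms(5)
    and sn = assms(6) and m = assms(7)
  have tpos: "0 < card M" using big by (cases "card M = 0") auto
  have Lpos: "0 < card L" using tpos card_mono[OF fin sub] by linarith
  define S where "S = (\<Sum>j<m. cos ((4 * real j + 2) * \<theta>))"
  define K where "K = 1 / (2 * pi) * (1 / (1 - pi\<^sup>2 / 96))"
  have P: "P_avg L M m = 1/2 - S / (2 * real m)"
    unfolding S_def by (rule P_avg_formula[OF fin sub tpos th0 th1 sn m])
  have quarter: "1/4 < (sin \<theta>)\<^sup>2" using big Lpos unfolding sn by (simp add: field_simps)
  show ?thesis
  proof (cases "m = 1")
    case True
    have "P_avg L M m = (sin \<theta>)\<^sup>2"
      unfolding P_avg_def True using success_formula[OF fin sub tpos th0 th1 sn, of 0] by simp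
    then show ?thesis using True quarter by simp
  next
    case False
    then have m2: "2 \<le> m" using m by simp
    have D: "0 < 1 - pi\<^sup>2 / 96"
    proof -
      have "pi\<^sup>2 \<le> 4^2" using pi_less_4 pi_gt_zero by (intro power_mono) auto
      then show ?thesis by simp
    qed
    have Kpos: "0 < K" unfolding K_def using D pi_gt_zero by simp
    have goal: "S \<le> 2 * real m * K"
    proof (cases "\<theta> = pi / 2")
      case True
      have "S = (\<Sum>j<m. -1)"
        unfolding S_def
      proof (rule sum.cong)
        fix j assume "j \<in> {..<m}"
        have e: "(4 * real j + 2) * \<theta> = real (2*j+1) * pi" unfolding True by (simp add: algebra_simps)
        have "cos (real (2*j+1) * pi) = (-1)^(2*j+1)" by (rule cos_npi)
        then show "cos ((4 * real j + 2) * \<theta>) = -1" unfolding e by simp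
      qed simp
      then have "S \<le> 0" by simp
      moreover have "0 \<le> 2 * real m * K" using Kpos by simp
      ultimately show ?thesis by linarith
    next
      case False
      define \<phi> where "\<phi> = pi - 2 * \<theta>"
      have th6: "pi / 6 < \<theta>"
      proof (rule ccontr)
        assume "\<not> pi / 6 < \<theta>"
        then have "sin \<theta> \<le> sin (pi/6)" using th0 by (intro sin_monotone_2pi_le) auto
        then have "sin \<theta> \<le> 1/2" by (simp add: sin_30)
        moreover have "0 \<le> sin \<theta>" using th0 th1 by (intro sin_ge_zero) auto
        ultimately have "(sin \<theta>)\<^sup>2 \<le> (1/2)\<^sup>2" by (intro power_mono) auto
        then show False using quarter by (simp add: power2_eq_square)
      qed
      have ph0: "0 < \<phi>" using False th1 unfolding \<phi>_def by simp
      have ph1: "\<phi> < 2 * pi / 3" using th6 unfolding \<phi>_def by simp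
      have sphi: "sin (2*\<theta>) = sin \<phi>" unfolding \<phi>_def by (simp add: sin_diff)
      have sphip: "0 < sin \<phi>" using ph0 ph1 by (intro sin_gt_zero) auto
      have s4: "sin (4 * real m * \<theta>) = - sin (2 * real m * \<phi>)"
      proof -
        have e: "4 * real m * \<theta> = real (2*m) * pi - 2 * real m * \<phi>" unfolding \<phi>_def by (simp add: algebra_simps)
        have s0: "sin (real (2*m) * pi) = 0" by (rule sin_npi)
        have c0: "cos (real (2*m) * pi) = (-1)^(2*m)" by (rule cos_npi)
        have c1: "cos (real (2*m) * pi) = 1" unfolding c0 by simp
        show ?thesis unfolding e sin_diff s0 c1 by simp
      qed
      have key: "2 * sin \<phi> * S = - sin (2 * real m * \<phi>)"
        using sum_telescope[of \<theta> m] unfolding S_def sphi s4 .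
      have main: "- sin (2 * real m * \<phi>) \<le> 4 * real m * K * sin \<phi>"
      proof (cases "2 * real m * \<phi> \<le> pi")
        case True
        then have "0 \<le> sin (2 * real m * \<phi>)" using ph0 by (intro sin_ge_zero) auto
        moreover have "0 \<le> 4 * real m * K * sin \<phi>" using Kpos sphip by simp
        ultimately show ?thesis by linarith
      next
        case gt: False
        show ?thesis
        proof (cases "\<phi> \<le> pi / 4")
          case True
          have "\<phi>^2 \<le> (pi/4)^2" using True ph0 by (intro power_mono) auto
          then have "\<phi> * (1 - pi\<^sup>2 / 96) \<le> \<phi> - \<phi>^3/6" using ph0
            by (simp add: power2_eq_square power3_eq_cube field_simps mult_left_mono)
          also have "\<dots> \<le> sin \<phi>" using sin_ge_cubic ph0 by simp
          finally have sb: "\<phi> * (1 - pi\<^sup>2 / 96) \<le> sin \<phi>" .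
          have "4 * real m * K * (\<phi> * (1 - pi\<^sup>2 / 96)) = 2 * real m * \<phi> / pi"
            unfolding K_def using D pi_gt_zero by (simp add: field_simps)
          also have "\<dots> > 1" using gt pi_gt_zero by (simp add: field_simps)
          finally have "1 < 4 * real m * K * (\<phi> * (1 - pi\<^sup>2 / 96))" .
          also have "\<dots> \<le> 4 * real m * K * sin \<phi>" using sb Kpos m by (intro mult_left_mono) auto
          finally show ?thesis using sin_ge_minus_one[of "2 * real m * \<phi>"] by linarith
        next
          case False
          have s45: "sqrt 2 / 2 \<le> sin \<phi>"
          proof (cases "\<phi> \<le> pi / 2")
            case True
            then have "sin (pi/4) \<le> sin \<phi>" using False by (intro sin_monotone_2pi_le) auto
            then show ?thesis by (simp add: sin_45)
          next
            case c2: False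
            have "sin (pi/4) \<le> sin (pi - \<phi>)" using c2 ph1 by (intro sin_monotone_2pi_le) auto
            then show ?thesis by (simp add: sin_45)
          qed
          have "1 \<le> 4 * sqrt 2 * K" using numeric unfolding K_def .
          also have "\<dots> = 8 * K * (sqrt 2 / 2)" by simp
          also have "\<dots> \<le> 4 * real m * K * sin \<phi>"
          proof (rule mult_mono)
            show "8 * K \<le> 4 * real m * K" using m2 Kpos by simp
          qed (use s45 Kpos m in auto)
          finally show ?thesis using sin_ge_minus_one[of "2 * real m * \<phi>"] by linarith
        qed
      qed
      have "2 * sin \<phi> * S \<le> 2 * sin \<phi> * (2 * real m * K)" using key main by (simp add: algebra_simps)
      then show ?thesis using sphip by (simp add: mult.commute mult.left_commute)
    qed
    have "1 / 2 - K \<le> 1/2 - S / (2 * real m)" using goal m by (simp add: field_simps)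
    then show ?thesis unfolding P K_def[symmetric] using False by simp
  qed
qed

end
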